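(* Let $V$ be a vertex operator algebra that is strongly generated by a single homogeneous element $u\in V$, i.e. $V$ is spanned by the vectors $u_{-k_1}u_{-k_2}\cdots u_{-k_r}\mathbf{1}$ with $r\in\mathbb{N}$ and $k_1,\dots,k_r\in\mathbb{Z}_+$. Let $n\in\mathbb{Z}_+$ and suppose that either (i) $1\le \mathrm{wt}\,u\le n$, or (ii) $\mathrm{wt}\,u=0$ and $u_{-2}\mathbf{1}\neq 0$. Then $O^L(V)\not\subset O_n^\circ(V)$.
   Context: $V$ has vacuum $\mathbf{1}$, vertex operator $Y(v,x)=\sum_{k\in\mathbb{Z}}v_kx^{-k-1}$, Virasoro operators $L(m)$, and $\mathrm{wt}\,v$ is the $L(0)$-eigenvalue of a homogeneous $v$. For $n\in\mathbb{N}$, homogeneous $a\in V$ and $b\in V$, $a\circ_n b=\mathrm{Res}_x\,(1+x)^{\mathrm{wt}\,a+n}Y(a,x)b\,x^{-2n-2}$ (extended linearly in $a$). $O_n^\circ(V)=\mathrm{span}\{a\circ_n b:a,b\in V\}$ and $O^L(V)=\{(L(-1)+L(0))v: v\in V\}$. *)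

theory Defs
  imports Complex_Main "HOL-Library.Groups_Big_Fun"
begin

text \<open>A vertex operator algebra over the complex numbers, in the sense of
Frenkel-Lepowsky-Meurman / Lepowsky-Li, presented through its modes.
Y a k b denotes the mode a_k b, i.e. Y(a,x) b = sum_k (Y a k b) x^(-k-1).
vac is the vacuum vector and om the conformal vector, L(m) = om_(m+1).\<close>

definition Lop :: "('v \<Rightarrow> int \<Rightarrow> 'v \<Rightarrow> 'v) \<Rightarrow> 'v \<Rightarrow> int \<Rightarrow> 'v \<Rightarrow> 'v" where
  "Lop Y om m = Y om (m + 1)"

definition wtspace :: "(complex \<Rightarrow> 'v \<Rightarrow> 'v) \<Rightarrow> ('v \<Rightarrow> int \<Rightarrow> 'v \<Rightarrow> 'v) \<Rightarrow> 'v \<Rightarrow> int \<Rightarrow> 'v set" where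
  "wtspace sm Y om n = {v. Lop Y om 0 v = sm (of_int n) v}"

definition is_VOA ::
  "(complex \<Rightarrow> 'v::ab_group_add \<Rightarrow> 'v) \<Rightarrow> ('v \<Rightarrow> int \<Rightarrow> 'v \<Rightarrow> 'v) \<Rightarrow> 'v \<Rightarrow> 'v \<Rightarrow> bool" where
  "is_VOA sm Y vac om \<longleftrightarrow>
     vector_space sm
   \<and> (\<forall>a k b c. Y a k (b + c) = Y a k b + Y a k c)
   \<and> (\<forall>a k s b. Y a k (sm s b) = sm s (Y a k b))
   \<and> (\<forall>a a' k b. Y (a + a') k b = Y a k b + Y a' k b)
   \<and> (\<forall>s a k b. Y (sm s a) k b = sm s (Y a k b))
   \<comment> \<open>truncation\<close>
   \<and> (\<forall>a b. \<exists>N. \<forall>k\<ge>N. Y a k b = 0)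
   \<comment> \<open>vacuum: Y(1,x) = id\<close>
   \<and> (\<forall>k b. Y vac k b = (if k = -1 then b else 0))
   \<comment> \<open>creation\<close>
   \<and> (\<forall>a k. k \<ge> 0 \<longrightarrow> Y a k vac = 0)
   \<and> (\<forall>a. Y a (-1) vac = a)
   \<comment> \<open>Jacobi identity in the form of the Borcherds identity\<close>
   \<and> (\<forall>a b c m n l.
        (\<Sum>i::nat. sm ((of_int m :: complex) gchoose i) (Y (Y a (l + int i) b) (m + n - int i) c))
      = (\<Sum>i::nat. sm ((-1) ^ i * ((of_int l :: complex) gchoose i))
            (Y a (m + l - int i) (Y b (n + int i) c)
             - sm (if even l then 1 else -1) (Y b (n + l - int i) (Y a (m + int i) c)))))
   \<comment> \<open>Virasoro relations with some central charge\<close>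
   \<and> (\<exists>cc::complex. \<forall>m k v.
        Lop Y om m (Lop Y om k v) - Lop Y om k (Lop Y om m v)
      = sm (of_int (m - k)) (Lop Y om (m + k) v)
        + (if m + k = 0 then sm ((of_int m ^ 3 - of_int m) / 12 * cc) v else 0))
   \<comment> \<open>L(-1)-derivative property: Y(L(-1)a,x) = d/dx Y(a,x)\<close>
   \<and> (\<forall>a k b. Y (Lop Y om (-1) a) k b = sm (- of_int k) (Y a (k - 1) b))
   \<comment> \<open>Z-grading by L(0)-eigenvalues, finite-dimensional, bounded below\<close>
   \<and> module.span sm (\<Union>n. wtspace sm Y om n) = UNIV
   \<and> (\<forall>n. \<exists>B. finite B \<and> module.span sm B = wtspace sm Y om n)
   \<and> (\<exists>N. \<forall>n<N. wtspace sm Y om n = {0})"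

text \<open>a \<circ>_n b for a homogeneous of weight w:
  Res_x (1+x)^(w+n) Y(a,x) b x^(-2n-2) = sum_(i>=0) binom(w+n,i) a_(i-2n-2) b.\<close>
definition circ_n ::
  "(complex \<Rightarrow> 'v::ab_group_add \<Rightarrow> 'v) \<Rightarrow> ('v \<Rightarrow> int \<Rightarrow> 'v \<Rightarrow> 'v) \<Rightarrow> nat \<Rightarrow> int \<Rightarrow> 'v \<Rightarrow> 'v \<Rightarrow> 'v" where
  "circ_n sm Y n w a b =
     (\<Sum>i::nat. sm ((of_int (w + int n) :: complex) gchoose i) (Y a (int i - 2 * int n - 2) b))"

text \<open>O_n^circ(V): span of a \<circ>_n b, a homogeneous (the extension of
  \<circ>_n to all a is linear in a, so this is the span over all a, b).\<close>
definition O_circ ::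
  "(complex \<Rightarrow> 'v::ab_group_add \<Rightarrow> 'v) \<Rightarrow> ('v \<Rightarrow> int \<Rightarrow> 'v \<Rightarrow> 'v) \<Rightarrow> 'v \<Rightarrow> nat \<Rightarrow> 'v set" where
  "O_circ sm Y om n =
     module.span sm {circ_n sm Y n w a b | a b w. a \<in> wtspace sm Y om w}"

definition O_L :: "('v::ab_group_add \<Rightarrow> int \<Rightarrow> 'v \<Rightarrow> 'v) \<Rightarrow> 'v \<Rightarrow> 'v set" where
  "O_L Y om = {Lop Y om (-1) v + Lop Y om 0 v | v. True}"

definition monom :: "('v \<Rightarrow> int \<Rightarrow> 'v \<Rightarrow> 'v) \<Rightarrow> 'v \<Rightarrow> 'v \<Rightarrow> nat list \<Rightarrow> 'v" where
  "monom Y vac u ks = foldr (\<lambda>k v. Y u (- int k) v) ks vac"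

definition strongly_generated_by ::
  "(complex \<Rightarrow> 'v::ab_group_add \<Rightarrow> 'v) \<Rightarrow> ('v \<Rightarrow> int \<Rightarrow> 'v \<Rightarrow> 'v) \<Rightarrow> 'v \<Rightarrow> 'v \<Rightarrow> bool" where
  "strongly_generated_by sm Y vac u \<longleftrightarrow>
     module.span sm {monom Y vac u ks | ks. \<forall>k\<in>set ks. k \<ge> 1} = UNIV"

end

theory Submission imports Defs begin

locale voa =
  fixes sm :: "complex \<Rightarrow> 'v::ab_group_add \<Rightarrow> 'v"
    and Y :: "'v \<Rightarrow> int \<Rightarrow> 'v \<Rightarrow> 'v"
    and vac om :: 'v
  assumes VOA: "is_VOA sm Y vac om"
begin

lemma vs: "vector_space sm" using VOA unfolding is_VOA_def by (elim conjE) simp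

sublocale vector_space sm by (rule vs)

lemma Yadd: "Y a k (b + c) = Y a k b + Y a k c" using VOA unfolding is_VOA_def by (elim conjE) simp
lemma Ysm: "Y a k (sm s b) = sm s (Y a k b)" using VOA unfolding is_VOA_def by (elim conjE) simp
lemma Yaddl: "Y (a + a') k b = Y a k b + Y a' k b" using VOA unfolding is_VOA_def by (elim conjE) simp
lemma Ysml: "Y (sm s a) k b = sm s (Y a k b)" using VOA unfolding is_VOA_def by (elim conjE) simp
lemma trunc: "\<exists>N. \<forall>k\<ge>N. Y a k b = 0" using VOA unfolding is_VOA_def by (elim conjE) simp
lemma creat0: "k \<ge> 0 \<Longrightarrow> Y a k vac = 0" using VOA unfolding is_VOA_def by (elim conjE) simp
lemma creat1: "Y a (-1) vac = a" using VOA unfolding is_VOA_def by (elim conjE) simp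
lemma deriv: "Y (Lop Y om (-1) a) k b = sm (- of_int k) (Y a (k - 1) b)"
  using VOA unfolding is_VOA_def by (elim conjE) simp
lemma borch: "(\<Sum>i::nat. sm ((of_int m :: complex) gchoose i) (Y (Y a (l + int i) b) (m + n - int i) c))
      = (\<Sum>i::nat. sm ((-1) ^ i * ((of_int l :: complex) gchoose i))
            (Y a (m + l - int i) (Y b (n + int i) c)
             - sm (if even l then 1 else -1) (Y b (n + l - int i) (Y a (m + int i) c))))"
  using VOA unfolding is_VOA_def by (elim conjE) simp

lemma Y0: "Y a k 0 = 0"
  using Yadd[of a k 0 0] by simp
lemma Y0l: "Y 0 k b = 0"
  using Yaddl[of 0 0 k b] by simp
lemma Ydiff: "Y a k (b - c) = Y a k b - Y a k c"
  using Yadd[of a k "b - c" c] by (simp add: algebra_simps)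
lemma Ysum: "Y a k (sum f S) = (\<Sum>x\<in>S. Y a k (f x))"
  by (induct S rule: infinite_finite_induct) (simp_all add: Y0 Yadd)

abbreviation V where "V j \<equiv> wtspace sm Y om j"

lemma V_iff: "x \<in> V j \<longleftrightarrow> Y om 1 x = sm (of_int j) x"
  by (simp add: wtspace_def Lop_def)

lemma subspace_V: "subspace (V j)"
  unfolding subspace_def
  by (auto simp: V_iff Y0 Yadd Ysm scale_right_distrib mult.commute)

lemma gch0: "i > w \<Longrightarrow> (of_nat w :: complex) gchoose i = 0"
  by (simp add: binomial_gbinomial[symmetric])

lemma WL:
  assumes a: "a \<in> V w" and c: "c \<in> V j"
  shows "Y a k c \<in> V (w + j - k - 1)"
proof -
  have B: "(\<Sum>i::nat. sm ((of_int 1 :: complex) gchoose i) (Y (Y om (0 + int i) a) (1 + k - int i) c))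
      = (\<Sum>i::nat. sm ((-1) ^ i * ((of_int 0 :: complex) gchoose i))
            (Y om (1 + 0 - int i) (Y a (k + int i) c)
             - sm (if even (0::int) then 1 else -1) (Y a (k + 0 - int i) (Y om (1 + int i) c))))"
    by (rule borch)
  have L: "(\<Sum>i::nat. sm ((of_int 1 :: complex) gchoose i) (Y (Y om (0 + int i) a) (1 + k - int i) c))
     = Y (Y om 0 a) (1 + k) c + Y (Y om 1 a) k c"
  proof -
    have "(\<Sum>i::nat. sm ((of_int 1 :: complex) gchoose i) (Y (Y om (0 + int i) a) (1 + k - int i) c))
       = (\<Sum>i\<in>{0,1}. sm ((of_int 1 :: complex) gchoose i) (Y (Y om (0 + int i) a) (1 + k - int i) c))"
    proof (rule Sum_any.expand_superset)
      show "{i. sm ((of_int 1 :: complex) gchoose i) (Y (Y om (0 + int i) a) (1 + k - int i) c) \<noteq> 0} \<subseteq> {0,1}"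
      proof
        fix i assume "i \<in> {i. sm ((of_int 1 :: complex) gchoose i) (Y (Y om (0 + int i) a) (1 + k - int i) c) \<noteq> 0}"
        then have "(of_nat 1 :: complex) gchoose i \<noteq> 0" by auto
        then have "\<not> i > 1" using gch0[of 1 i] by auto
        then show "i \<in> {0,1}" by auto
      qed
    qed simp
    also have "\<dots> = Y (Y om 0 a) (1 + k) c + Y (Y om 1 a) k c" by simp
    finally show ?thesis .
  qed
  have R: "(\<Sum>i::nat. sm ((-1) ^ i * ((of_int 0 :: complex) gchoose i))
            (Y om (1 + 0 - int i) (Y a (k + int i) c)
             - sm (if even (0::int) then 1 else -1) (Y a (k + 0 - int i) (Y om (1 + int i) c))))
      = Y om 1 (Y a k c) - Y a k (Y om 1 c)"
  proof -
    have "(\<Sum>i::nat. sm ((-1) ^ i * ((of_int 0 :: complex) gchoose i))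
            (Y om (1 + 0 - int i) (Y a (k + int i) c)
             - sm (if even (0::int) then 1 else -1) (Y a (k + 0 - int i) (Y om (1 + int i) c))))
       = (\<Sum>i\<in>{0}. sm ((-1) ^ i * ((of_int 0 :: complex) gchoose i))
            (Y om (1 + 0 - int i) (Y a (k + int i) c)
             - sm (if even (0::int) then 1 else -1) (Y a (k + 0 - int i) (Y om (1 + int i) c))))"
    proof (rule Sum_any.expand_superset)
      show "{i. sm ((-1) ^ i * ((of_int 0 :: complex) gchoose i))
            (Y om (1 + 0 - int i) (Y a (k + int i) c)
             - sm (if even (0::int) then 1 else -1) (Y a (k + 0 - int i) (Y om (1 + int i) c))) \<noteq> 0} \<subseteq> {0}"
      proof
        fix i assume "i \<in> {i. sm ((-1) ^ i * ((of_int 0 :: complex) gchoose i))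
            (Y om (1 + 0 - int i) (Y a (k + int i) c)
             - sm (if even (0::int) then 1 else -1) (Y a (k + 0 - int i) (Y om (1 + int i) c))) \<noteq> 0}"
        then have "(of_nat 0 :: complex) gchoose i \<noteq> 0" by auto
        then have "\<not> i > 0" using gch0[of 0 i] by auto
        then show "i \<in> {0}" by auto
      qed
    qed simp
    also have "\<dots> = Y om 1 (Y a k c) - Y a k (Y om 1 c)" by simp
    finally show ?thesis .
  qed
  have d: "Y (Y om 0 a) (1 + k) c = sm (- of_int (1 + k)) (Y a k c)"
    using deriv[of a "1 + k" c] by (simp add: Lop_def)
  have a1: "Y om 1 a = sm (of_int w) a" using a by (simp add: V_iff)
  have c1: "Y om 1 c = sm (of_int j) c" using c by (simp add: V_iff)
  have "Y om 1 (Y a k c) = Y a k (Y om 1 c) + sm (- of_int (1 + k)) (Y a k c) + sm (of_int w) (Y a k c)"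
  proof -
    have E0: "Y (Y om 0 a) (1 + k) c + Y (Y om 1 a) k c = Y om 1 (Y a k c) - Y a k (Y om 1 c)"
      using B unfolding L R .
    note E = E0[symmetric]
    then have "Y om 1 (Y a k c) - Y a k (Y om 1 c) = sm (- of_int (1 + k)) (Y a k c) + sm (of_int w) (Y a k c)"
      by (simp only: d a1 Ysml)
    then show ?thesis by (simp add: diff_eq_eq add.assoc)
  qed
  also have "\<dots> = sm (of_int (w + j - k - 1)) (Y a k c)"
  proof -
    have e: "(of_int (w + j - k - 1) :: complex) = of_int j + - of_int (1 + k) + of_int w" by simp
    show ?thesis unfolding c1 e by (simp only: Ysm scale_left_distrib)
  qed
  finally show ?thesis by (simp add: V_iff)
qed

lemma V0: "0 \<in> V j" using subspace_V subspace_0 by blast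
lemma Vadd: "x \<in> V j \<Longrightarrow> y \<in> V j \<Longrightarrow> x + y \<in> V j" using subspace_V subspace_add by blast
lemma Vsc: "x \<in> V j \<Longrightarrow> sm c x \<in> V j" using subspace_V subspace_scale by blast

lemma L0sum: "Y om 1 (sum f S) = (\<Sum>x\<in>S. Y om 1 (f x))" by (rule Ysum)

lemma SZ: "finite S \<Longrightarrow> (\<forall>j\<in>S. w j \<in> V j) \<Longrightarrow> sum w S = 0 \<Longrightarrow> \<forall>j\<in>S. w j = 0"
proof (induct S arbitrary: w rule: finite_induct)
  case empty
  then show ?case by simp
next
  case (insert j0 S)
  have s0: "w j0 + sum w S = 0" using insert by simp
  have "Y om 1 (w j0 + sum w S) = 0" using s0 Y0 by simp
  then have e1: "sm (of_int j0) (w j0) + (\<Sum>j\<in>S. sm (of_int j) (w j)) = 0"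
    using insert(4) by (simp add: Yadd Ysum V_iff)
  have e2: "sm (of_int j0) (w j0) + (\<Sum>j\<in>S. sm (of_int j0) (w j)) = 0"
    using arg_cong[OF s0, of "sm (of_int j0)"] by (simp add: scale_right_distrib scale_sum_right)
  have "(\<Sum>j\<in>S. sm (of_int j - of_int j0) (w j)) = 0"
  proof -
    have "(\<Sum>j\<in>S. sm (of_int j - of_int j0) (w j)) = (\<Sum>j\<in>S. sm (of_int j) (w j)) - (\<Sum>j\<in>S. sm (of_int j0) (w j))"
      by (simp add: scale_left_diff_distrib sum_subtractf)
    also have "\<dots> = 0" using e1 e2 by (metis add_diff_cancel_left' diff_self)
    finally show ?thesis .
  qed
  then have "\<forall>j\<in>S. sm (of_int j - of_int j0) (w j) = 0"
    using insert(3)[of "\<lambda>j. sm (of_int j - of_int j0) (w j)"] insert(4) by (simp add: Vsc)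
  then have wS: "\<forall>j\<in>S. w j = 0" using insert(2) by auto
  then have "sum w S = 0" by simp
  then have "w j0 = 0" using s0 by simp
  then show ?case using wS by simp
qed

lemma span_rep:
  assumes "x \<in> span (\<Union>j\<in>A. V j)"
  shows "\<exists>S w. finite S \<and> S \<subseteq> A \<and> (\<forall>j. w j \<in> V j) \<and> (\<forall>j. j \<notin> S \<longrightarrow> w j = 0) \<and> x = sum w S"
proof -
  define P where "P = {x. \<exists>S w. finite S \<and> S \<subseteq> A \<and> (\<forall>j. w j \<in> V j) \<and> (\<forall>j. j \<notin> S \<longrightarrow> w j = 0) \<and> x = sum w S}"
  have base: "x \<in> P" if "x \<in> (\<Union>j\<in>A. V j)" for x
  proof -
    from that obtain j where j: "j \<in> A" "x \<in> V j" by auto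
    show ?thesis unfolding P_def
      by (simp only: mem_Collect_eq, rule exI[of _ "{j}"], rule exI[of _ "\<lambda>i. if i = j then x else 0"]) (use j V0 in auto)
  qed
  have "subspace P" unfolding subspace_def
  proof (intro conjI allI impI ballI)
    show "0 \<in> P" unfolding P_def
      by (simp only: mem_Collect_eq, rule exI[of _ "{}"], rule exI[of _ "\<lambda>i. 0"]) (use V0 in auto)
  next
    fix x y assume "x \<in> P" "y \<in> P"
    then obtain S1 w1 S2 w2 where 1: "finite S1" "S1 \<subseteq> A" "\<forall>j. w1 j \<in> V j" "\<forall>j. j \<notin> S1 \<longrightarrow> w1 j = 0" "x = sum w1 S1"
      and 2: "finite S2" "S2 \<subseteq> A" "\<forall>j. w2 j \<in> V j" "\<forall>j. j \<notin> S2 \<longrightarrow> w2 j = 0" "y = sum w2 S2"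
      unfolding P_def by auto
    have a1: "sum w1 S1 = sum w1 (S1 \<union> S2)" by (rule sum.mono_neutral_left) (use 1 2 in auto)
    have a2: "sum w2 S2 = sum w2 (S1 \<union> S2)" by (rule sum.mono_neutral_left) (use 1 2 in auto)
    show "x + y \<in> P" unfolding P_def
      apply (simp only: mem_Collect_eq)
      apply (rule exI[of _ "S1 \<union> S2"], rule exI[of _ "\<lambda>j. w1 j + w2 j"])
      using 1 2 a1 a2 Vadd by (auto simp: sum.distrib)
  next
    fix c x assume "x \<in> P"
    then obtain S1 w1 where 1: "finite S1" "S1 \<subseteq> A" "\<forall>j. w1 j \<in> V j" "\<forall>j. j \<notin> S1 \<longrightarrow> w1 j = 0" "x = sum w1 S1"
      unfolding P_def by auto
    show "sm c x \<in> P" unfolding P_def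
      apply (simp only: mem_Collect_eq)
      apply (rule exI[of _ "S1"], rule exI[of _ "\<lambda>j. sm c (w1 j)"])
      using 1 Vsc by (auto simp: scale_sum_right)
  qed
  then have "x \<in> P" using span_subspace_induct[OF assms] base by blast
  then show ?thesis unfolding P_def by blast
qed

lemma Indep:  assumes z: "z \<in> V m" and zs: "z \<in> span (\<Union>j\<in>A. V j)" and m: "m \<notin> A"
  shows "z = 0"
proof -
  obtain S w where S: "finite S" "S \<subseteq> A" "\<forall>j. w j \<in> V j" "\<forall>j. j \<notin> S \<longrightarrow> w j = 0" "z = sum w S"
    using span_rep[OF zs] by blast
  have mS: "m \<notin> S" using S m by auto
  let ?w = "w(m := - z)"
  have wS: "sum ?w S = sum w S" by (rule sum.cong) (use mS in auto)
  have "sum ?w (insert m S) = - z + sum w S" using S(1) mS wS by simp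
  also have "\<dots> = 0" using S by simp
  finally have sum0: "sum ?w (insert m S) = 0" .
  have inV: "\<forall>j\<in>insert m S. ?w j \<in> V j"
    using S(3) z Vsc[of z m "-1"] by (auto simp: scale_minus_left)
  have "?w m = 0" using SZ[OF _ inV sum0] S(1) by (meson finite_insert insertI1)
  then show ?thesis by simp
qed


lemma vacV: "vac \<in> V 0" by (simp add: V_iff creat0)

lemma monomV:
  assumes u: "u \<in> V wtu"
  shows "monom Y vac u ks \<in> V (sum_list (map (\<lambda>k. wtu + int k - 1) ks))"
proof (induct ks)
  case Nil
  then show ?case by (simp add: monom_def vacV)
next
  case (Cons k ks)
  have "monom Y vac u (k # ks) = Y u (- int k) (monom Y vac u ks)" by (simp add: monom_def)
  moreover have "Y u (- int k) (monom Y vac u ks) \<in> V (wtu + sum_list (map (\<lambda>k. wtu + int k - 1) ks) - (- int k) - 1)"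
    by (rule WL[OF u Cons])
  ultimately show ?case by (simp add: algebra_simps)
qed

lemma all_pos:
  assumes u: "u \<in> V wtu" and w0: "wtu \<ge> 0" and sg: "strongly_generated_by sm Y vac u"
  shows "b \<in> span (\<Union>j\<in>{0..}. V j)"
proof -
  have "{monom Y vac u ks | ks. \<forall>k\<in>set ks. k \<ge> 1} \<subseteq> (\<Union>j\<in>{0..}. V j)"
  proof
    fix x assume "x \<in> {monom Y vac u ks | ks. \<forall>k\<in>set ks. k \<ge> 1}"
    then obtain ks where x: "x = monom Y vac u ks" and ks: "\<forall>k\<in>set ks. k \<ge> 1" by auto
    have "sum_list (map (\<lambda>k. wtu + int k - 1) ks) \<ge> 0"
      by (rule sum_list_nonneg) (use ks w0 in auto)
    then show "x \<in> (\<Union>j\<in>{0..}. V j)" using monomV[OF u, of ks] x by auto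
  qed
  then have "span {monom Y vac u ks | ks. \<forall>k\<in>set ks. k \<ge> 1} \<subseteq> span (\<Union>j\<in>{0..}. V j)"
    by (rule span_mono)
  then show ?thesis using sg unfolding strongly_generated_by_def by auto
qed

lemma Y_high:
  assumes a: "a \<in> V w" and k: "k \<le> w - int n - 2" and b: "b \<in> span (\<Union>j\<in>{0..}. V j)"
  shows "Y a k b \<in> span (\<Union>j\<in>{int n + 1..}. V j)"
proof -
  have "subspace {b. Y a k b \<in> span (\<Union>j\<in>{int n + 1..}. V j)}"
    unfolding subspace_def by (auto simp: Y0 Yadd Ysm span_zero span_add span_scale)
  moreover have "Y a k x \<in> span (\<Union>j\<in>{int n + 1..}. V j)" if "x \<in> (\<Union>j\<in>{0..}. V j)" for x
  proof -
    from that obtain j where j: "j \<ge> 0" "x \<in> V j" by auto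
    have "Y a k x \<in> V (w + j - k - 1)" by (rule WL[OF a j(2)])
    moreover have "w + j - k - 1 \<in> {int n + 1..}" using j k by auto
    ultimately show ?thesis by (blast intro: span_base)
  qed
  ultimately show ?thesis using span_subspace_induct[OF b] by blast
qed

lemma circ_high:
  assumes a: "a \<in> V w" and pos: "\<And>b. b \<in> span (\<Union>j\<in>{0..}. V j)"
  shows "circ_n sm Y n w a b \<in> span (\<Union>j\<in>{int n + 1..}. V j)"
proof (cases "w < 0")
  case True
  then have "a = 0" using Indep[OF a pos] by auto
  then show ?thesis by (simp add: circ_n_def Y0l span_zero)
next
  case False
  let ?f = "\<lambda>i::nat. sm ((of_int (w + int n) :: complex) gchoose i) (Y a (int i - 2 * int n - 2) b)"
  have "circ_n sm Y n w a b = sum ?f {0..nat (w + int n)}"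
    unfolding circ_n_def
  proof (rule Sum_any.expand_superset)
    show "{i. ?f i \<noteq> 0} \<subseteq> {0..nat (w + int n)}"
    proof
      fix i assume "i \<in> {i. ?f i \<noteq> 0}"
      then have ne: "(of_int (w + int n) :: complex) gchoose i \<noteq> 0" by auto
      have "(of_int (w + int n) :: complex) = of_nat (nat (w + int n))" using False by simp
      then have "\<not> i > nat (w + int n)" using ne gch0[of "nat (w + int n)" i] by auto
      then show "i \<in> {0..nat (w + int n)}" by auto
    qed
  qed simp
  also have "\<dots> \<in> span (\<Union>j\<in>{int n + 1..}. V j)"
  proof (rule span_sum)
    fix i assume "i \<in> {0..nat (w + int n)}"
    then have "int i - 2 * int n - 2 \<le> w - int n - 2" using False by auto
    then show "?f i \<in> span (\<Union>j\<in>{int n + 1..}. V j)"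
      by (intro span_scale Y_high[OF a _ pos])
  qed
  finally show ?thesis .
qed

end

theorem theorem4p1:
  fixes sm :: "complex \<Rightarrow> 'v::ab_group_add \<Rightarrow> 'v"
    and Y :: "'v \<Rightarrow> int \<Rightarrow> 'v \<Rightarrow> 'v"
    and vac om u :: 'v and wtu :: int and n :: nat
  assumes "is_VOA sm Y vac om"
    and "u \<noteq> 0" and "u \<in> wtspace sm Y om wtu"
    and "strongly_generated_by sm Y vac u"
    and "n \<ge> 1"
    and "(1 \<le> wtu \<and> wtu \<le> int n) \<or> (wtu = 0 \<and> Y u (-2) vac \<noteq> 0)"
  shows "\<not> (O_L Y om \<subseteq> O_circ sm Y om n)"
proof
  assume sub: "O_L Y om \<subseteq> O_circ sm Y om n"
  interpret voa sm Y vac om by (rule voa.intro) (rule assms(1))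
  have u: "u \<in> V wtu" by (rule assms(3))
  have w0: "wtu \<ge> 0" using assms(6) by auto
  have pos: "\<And>b. b \<in> span (\<Union>j\<in>{0..}. V j)" by (rule all_pos[OF u w0 assms(4)])
  let ?W = "span (\<Union>j\<in>{int n + 1..}. V j)"
  have "O_circ sm Y om n \<subseteq> ?W"
    unfolding O_circ_def
  proof (rule span_minimal)
    show "{circ_n sm Y n w a b | a b w. a \<in> V w} \<subseteq> ?W"
    proof (rule subsetI)
      fix z assume "z \<in> {circ_n sm Y n w a b | a b w. a \<in> V w}"
      then obtain a b w where z: "z = circ_n sm Y n w a b" and a: "a \<in> V w" by auto
      show "z \<in> ?W" unfolding z by (rule circ_high[OF a pos])
    qed
  qed simp
  then have subW: "O_L Y om \<subseteq> ?W" using sub by blast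
  define x where "x = Lop Y om (-1) u + Lop Y om 0 u"
  have "x \<in> O_L Y om" unfolding x_def O_L_def by blast
  then have xW: "x \<in> ?W" using subW by blast
  define y where "y = Y u (-2) vac"
  have l1: "Lop Y om (-1) u = y"
  proof -
    have "Lop Y om (-1) u = Y (Lop Y om (-1) u) (-1) vac" by (simp add: creat1)
    also have "\<dots> = y" unfolding y_def by (simp add: deriv)
    finally show ?thesis .
  qed
  have l0: "Lop Y om 0 u = sm (of_int wtu) u" using u by (simp add: V_iff Lop_def)
  have yV: "y \<in> V (wtu + 1)" using WL[OF u vacV, of "-2"] unfolding y_def by (simp add: add.commute)
  have x: "x = y + sm (of_int wtu) u" unfolding x_def l1 l0 ..
  show False
  proof (cases "1 \<le> wtu \<and> wtu \<le> int n")
    case True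
    let ?A = "{int n + 1..} \<union> {wtu + 1}"
    have sm: "?W \<subseteq> span (\<Union>j\<in>?A. V j)" by (rule span_mono) auto
    have "x \<in> span (\<Union>j\<in>?A. V j)" using xW sm by (rule subsetD[rotated])
    moreover have "y \<in> span (\<Union>j\<in>?A. V j)" by (rule span_base) (use yV in auto)
    ultimately have "x - y \<in> span (\<Union>j\<in>?A. V j)" by (rule span_diff)
    then have s1: "sm (of_int wtu) u \<in> span (\<Union>j\<in>?A. V j)" using x by simp
    have s2: "sm (of_int wtu) u \<in> V wtu" using u by (rule Vsc)
    have s3: "wtu \<notin> ?A" using True by auto
    have "sm (of_int wtu) u = 0" by (rule Indep[OF s2 s1 s3])
    then show False using True assms(2) by simp
  next
    case False
    then have w: "wtu = 0" and ny: "y \<noteq> 0" using assms(6) unfolding y_def by auto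
    have "x = y" using x w by simp
    then have s1: "y \<in> ?W" using xW by simp
    have s2: "y \<in> V 1" using yV w by simp
    have s3: "(1::int) \<notin> {int n + 1..}" using assms(5) by auto
    have "y = 0" by (rule Indep[OF s2 s1 s3])
    then show False using ny by simp
  qed
qed

end
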